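(* Let $\mu:\mathbb{N}\to\mathbb{R}$ with increments $\gamma(n)=\mu(n+1)-\mu(n)$ satisfying $\gamma(n)\ge0$ and $\gamma(n+1)\le\gamma(n)$ for all $n\in\mathbb{N}$. Let $T,N,h$ be integers with $N\ge2$, $N\le T-1$ and $1\le h\le\lfloor N/2\rfloor$, and define $$\bar\mu=\frac1h\sum_{l=N-h+1}^{N}\mu(l).$$ Then $\bar\mu\le\mu(T)$ and $$\mu(T)-\bar\mu\le\frac12(2T-2N+h-1)\,\gamma(N-h+1).$$
   Context: In the paper $\mu$ is the expected-reward function of an arm (indexed by number of pulls), $N$ is the number of pulls of the arm before some round $t\le T$, and $h$ is the window width. *)

theory Defs
  imports Complex_Main
begin

end

theory Submission
  imports Defs
begin

lemma mono_mu:
  fixes \<mu> :: "nat \<Rightarrow> real"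
  assumes "\<And>n. \<mu> (n + 1) - \<mu> n \<ge> 0" and "m \<le> n"
  shows "\<mu> m \<le> \<mu> n"
  using assms(2)
proof (induction n rule: dec_induct)
  case base then show ?case by simp
next
  case (step n) then show ?case using assms(1)[of n] by simp
qed

lemma anti_g:
  fixes g :: "nat \<Rightarrow> real"
  assumes "\<And>n. g (n + 1) \<le> g n" and "m \<le> n"
  shows "g n \<le> g m"
  using assms(2)
proof (induction n rule: dec_induct)
  case base then show ?case by simp
next
  case (step n) then show ?case using assms(1)[of n] by simp
qed

lemma incr_bound:
  fixes \<mu> :: "nat \<Rightarrow> real"
  assumes dec: "\<And>n. \<mu> (n + 2) - \<mu> (n+1) \<le> \<mu> (n + 1) - \<mu> n" and "a \<le> l" and "l \<le> T"
  shows "\<mu> T - \<mu> l \<le> real (T - l) * (\<mu> (a + 1) - \<mu> a)"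
  using assms(3)
proof (induction T rule: dec_induct)
  case base then show ?case by simp
next
  case (step n)
  have "\<mu> (n + 1) - \<mu> n \<le> \<mu> (a + 1) - \<mu> a"
    using anti_g[of "\<lambda>n. \<mu> (n + 1) - \<mu> n" a n] dec step(1) assms(2)
    by (simp add: add.assoc)
  moreover have "real (Suc n - l) = real (n - l) + 1" using step(1) by simp
  ultimately show ?case using step(3) by (simp add: algebra_simps)
qed

lemma sum_lin:
  assumes "h \<le> N" and "N \<le> T"
  shows "2 * (\<Sum>l = N + 1 - h..N. real (T - l)) = real h * (2 * real T - 2 * real N + real h - 1)"
  using assms(1)
proof (induction h)
  case 0 then show ?case by simp
next
  case (Suc h)
  have "{N + 1 - Suc h..N} = insert (N - h) {N + 1 - h..N}" using Suc.prems by auto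
  moreover have "N - h \<notin> {N + 1 - h..N}" using Suc.prems by auto
  ultimately have "(\<Sum>l = N + 1 - Suc h..N. real (T - l)) = real (T - (N - h)) + (\<Sum>l = N + 1 - h..N. real (T - l))"
    by simp
  moreover have "real (T - (N - h)) = real T - real N + real h" using Suc.prems assms(2) by simp
  ultimately show ?case using Suc by (simp add: algebra_simps)
qed

theorem lemma7:
  fixes \<mu> :: "nat \<Rightarrow> real" and T N h :: nat
  defines "\<gamma> \<equiv> (\<lambda>n. \<mu> (n + 1) - \<mu> n)"
  assumes inc: "\<And>n. \<gamma> n \<ge> 0"
    and dec: "\<And>n. \<gamma> (n + 1) \<le> \<gamma> n"
    and N2: "N \<ge> 2" and NT: "N + 1 \<le> T"
    and h1: "1 \<le> h" and hN: "h \<le> N div 2"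
  defines "\<mu>bar \<equiv> (1 / real h) * (\<Sum>l = N - h + 1..N. \<mu> l)"
  shows "\<mu>bar \<le> \<mu> T \<and>
         \<mu> T - \<mu>bar \<le> (1/2) * (2 * real T - 2 * real N + real h - 1) * \<gamma> (N - h + 1)"
proof -
  let ?a = "N - h + 1"
  let ?S = "{N - h + 1..N}"
  have hle: "h \<le> N" using hN by simp
  have inc': "\<And>n. \<mu> (n + 1) - \<mu> n \<ge> 0" using inc by (simp add: \<gamma>_def)
  have dec': "\<And>n. \<mu> (n + 2) - \<mu> (n+1) \<le> \<mu> (n + 1) - \<mu> n"
    using dec by (simp add: \<gamma>_def add.assoc)
  have cardS: "card ?S = h" using hle h1 by simp
  have hpos: "real h > 0" using h1 by simp
  have eq: "\<mu> T - \<mu>bar = (1 / real h) * (\<Sum>l\<in>?S. (\<mu> T - \<mu> l))"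
    using hpos cardS by (simp add: \<mu>bar_def sum_subtractf field_simps)
  have s1: "(\<Sum>l\<in>?S. (\<mu> T - \<mu> l)) \<ge> 0"
    by (rule sum_nonneg) (use mono_mu[of \<mu>, OF inc'] NT in auto)
  have "(\<Sum>l\<in>?S. (\<mu> T - \<mu> l)) \<le> (\<Sum>l\<in>?S. real (T - l) * \<gamma> ?a)"
    by (rule sum_mono) (use incr_bound[of \<mu>, OF dec'] NT in \<open>auto simp: \<gamma>_def\<close>)
  also have "\<dots> = (\<Sum>l\<in>?S. real (T - l)) * \<gamma> ?a" by (simp add: sum_distrib_right)
  also have "(\<Sum>l\<in>?S. real (T - l)) = real h * (2 * real T - 2 * real N + real h - 1) / 2"
    using sum_lin[OF hle, of T] NT hle by (simp add: Suc_diff_le)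
  finally have s2: "(\<Sum>l\<in>?S. (\<mu> T - \<mu> l)) \<le> real h * (2 * real T - 2 * real N + real h - 1) / 2 * \<gamma> ?a" .
  show ?thesis
  proof
    have "0 \<le> \<mu> T - \<mu>bar" unfolding eq using s1 hpos by simp
    then show "\<mu>bar \<le> \<mu> T" by simp
    have "\<mu> T - \<mu>bar \<le> (1 / real h) * (real h * (2 * real T - 2 * real N + real h - 1) / 2 * \<gamma> ?a)"
      unfolding eq using s2 hpos by (intro mult_left_mono) auto
    also have "\<dots> = (1/2) * (2 * real T - 2 * real N + real h - 1) * \<gamma> ?a" using hpos by simp
    finally show "\<mu> T - \<mu>bar \<le> (1/2) * (2 * real T - 2 * real N + real h - 1) * \<gamma> ?a" .
  qed
qed

end
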